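(* Let $n\ge 3$ and let $S_n$ be the monoid defined below. Every element $a\in S_n$ can be written uniquely as a product $$a=a_1^{i}\,(a_1a_2\cdots a_n)^{\varepsilon}\,(a_2a_3\cdots a_n)^{j}\,b,$$ where $\varepsilon\in\{0,1\}$, $i,j$ are non-negative integers, $b\in S_n\setminus\bigl(a_1S_n\cup (a_2a_3\cdots a_n)S_n\bigr)$, and the following condition holds: if $j\ge 1$ then $\varepsilon=1$ or $i=0$. (Uniqueness means: the triple $(i,\varepsilon,j)$ and the element $b\in S_n$ are uniquely determined by $a$.)
   Context: For $n\ge 3$, $S_n$ denotes the monoid with generators $a_1,\dots,a_n$ and defining relations $a_1a_2\cdots a_n=a_{\sigma(1)}a_{\sigma(2)}\cdots a_{\sigma(n)}$ for all $\sigma$ in the cyclic subgroup of the symmetric group $\operatorname{Sym}_n$ generated by the cycle $(1,2,\dots,n)$; equivalently, $a_1a_2\cdots a_n=a_{k+1}\cdots a_na_1\cdots a_k$ for $k=1,\dots,n-1$. *)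

theory Defs
  imports Main
begin

text \<open>Words over the alphabet a_1,...,a_n are lists of natural numbers in {1..n};
  the letter k stands for the generator a_k.\<close>

definition words :: "nat \<Rightarrow> nat list set" where
  "words n = {w. set w \<subseteq> {1..n}}"

definition full_word :: "nat \<Rightarrow> nat list" where
  "full_word n = [1..<n+1]"

definition tail_word :: "nat \<Rightarrow> nat list" where
  "tail_word n = [2..<n+1]"

text \<open>One elementary rewriting step with a defining relation
  a_1...a_n = a_{k+1}...a_n a_1...a_k (k = 1..n-1), in either direction,
  inside an arbitrary context.\<close>
inductive S_step :: "nat \<Rightarrow> nat list \<Rightarrow> nat list \<Rightarrow> bool" for n where
  fwd: "1 \<le> k \<Longrightarrow> k < n \<Longrightarrow>
     S_step n (u @ full_word n @ v) (u @ rotate k (full_word n) @ v)"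
| bwd: "1 \<le> k \<Longrightarrow> k < n \<Longrightarrow>
     S_step n (u @ rotate k (full_word n) @ v) (u @ full_word n @ v)"

definition S_eq :: "nat \<Rightarrow> nat list \<Rightarrow> nat list \<Rightarrow> bool" where
  "S_eq n = (S_step n)\<^sup>*\<^sup>*"

definition in_right_ideal :: "nat \<Rightarrow> nat list \<Rightarrow> nat list \<Rightarrow> bool" where
  "in_right_ideal n p b \<longleftrightarrow> (\<exists>w\<in>words n. S_eq n b (p @ w))"

definition nf_word :: "nat \<Rightarrow> nat \<Rightarrow> nat \<Rightarrow> nat \<Rightarrow> nat list \<Rightarrow> nat list" where
  "nf_word n i e j b =
     replicate i 1 @ concat (replicate e (full_word n)) @ concat (replicate j (tail_word n)) @ b"

definition admissible :: "nat \<Rightarrow> nat \<Rightarrow> nat \<Rightarrow> nat \<Rightarrow> nat list \<Rightarrow> bool" where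
  "admissible n i e j b \<longleftrightarrow>
     e \<in> {0,1} \<and> b \<in> words n \<and>
     \<not> in_right_ideal n [1] b \<and> \<not> in_right_ideal n (tail_word n) b \<and>
     (j \<ge> 1 \<longrightarrow> e = 1 \<or> i = 0)"

end

theory Submission
  imports Defs
begin

definition ch :: "nat \<Rightarrow> nat \<Rightarrow> nat \<Rightarrow> nat list" where
  "ch n c m = map (\<lambda>i. (c+i) mod n + 1) [0..<m]"

lemma ch_length[simp]: "length (ch n c m) = m" by (simp add: ch_def)

lemma ch_nth: "i < m \<Longrightarrow> ch n c m ! i = (c+i) mod n + 1" by (simp add: ch_def)

lemma ch_add: "ch n c (a+b) = ch n c a @ ch n (c+a) b"
  by (rule nth_equalityI) (auto simp: ch_nth nth_append add.assoc)

lemma ch_cong: "a mod n = b mod n \<Longrightarrow> ch n a m = ch n b m"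
  by (rule nth_equalityI) (auto simp: ch_nth intro: mod_add_cong)

lemma ch_eq_mod: "m > 0 \<Longrightarrow> ch n a m = ch n b m \<Longrightarrow> a mod n = b mod n"
proof -
  assume "m > 0" "ch n a m = ch n b m"
  hence "ch n a m ! 0 = ch n b m ! 0" by simp
  thus ?thesis using \<open>m > 0\<close> by (simp add: ch_nth)
qed

lemma ch_set: "n > 0 \<Longrightarrow> set (ch n c m) \<subseteq> {1..n}"
  by (auto simp: ch_def Suc_le_eq)

lemma ch_zero[simp]: "ch n c 0 = []" by (simp add: ch_def)

lemma ch_one: "ch n c (Suc 0) = [c mod n + 1]" by (simp add: ch_def)

lemma full_alt: "full_word n = [1..<1+n]" by (simp add: full_word_def)
lemma tail_alt: "n \<ge> 2 \<Longrightarrow> tail_word n = [2..<2+(n-1)]" by (simp add: tail_word_def)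

lemma full_ch: "full_word n = ch n 0 n"
  unfolding full_alt by (rule nth_equalityI) (auto simp: ch_nth nth_upt simp del: upt_Suc upt_Suc_append)

lemma tail_ch: "n \<ge> 2 \<Longrightarrow> tail_word n = ch n 1 (n-1)"
  unfolding tail_alt by (rule nth_equalityI) (auto simp: ch_nth nth_upt simp del: upt_Suc upt_Suc_append)

lemma rot_ch: "k < n \<Longrightarrow> rotate k (full_word n) = ch n k n"
  unfolding full_alt by (rule nth_equalityI) (auto simp: ch_nth nth_rotate nth_upt simp del: upt_Suc upt_Suc_append)


lemma step_ch: "S_step n w w' \<Longrightarrow> \<exists>A B e e'. w = A @ ch n e n @ B \<and> w' = A @ ch n e' n @ B"
  by (induction rule: S_step.induct) (metis full_ch rot_ch)+

lemma step_sym: "S_step n w w' \<Longrightarrow> S_step n w' w"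
  by (induction rule: S_step.induct) (auto intro: S_step.intros)

lemma step_cong: "S_step n x y \<Longrightarrow> S_step n (P @ x @ Q) (P @ y @ Q)"
proof (induction rule: S_step.induct)
  case (fwd k u v)
  from S_step.fwd[OF fwd, of "P @ u" "v @ Q"] show ?case by simp
next
  case (bwd k u v)
  from S_step.bwd[OF bwd, of "P @ u" "v @ Q"] show ?case by simp
qed

lemma S_eq_refl[simp]: "S_eq n x x" by (simp add: S_eq_def)

lemma S_eq_trans: "S_eq n x y \<Longrightarrow> S_eq n y z \<Longrightarrow> S_eq n x z"
  unfolding S_eq_def by (rule rtranclp_trans)

lemma S_eq_sym: "S_eq n x y \<Longrightarrow> S_eq n y x"
  unfolding S_eq_def
proof (induction rule: rtranclp_induct)
  case base then show ?case by simp
next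
  case (step y z)
  then show ?case by (meson converse_rtranclp_into_rtranclp step_sym)
qed

lemma S_eq_cong: "S_eq n x y \<Longrightarrow> S_eq n (P @ x @ Q) (P @ y @ Q)"
  unfolding S_eq_def
proof (induction rule: rtranclp_induct)
  case base then show ?case by simp
next
  case (step y z)
  then show ?case by (meson rtranclp.rtrancl_into_rtrancl step_cong)
qed

lemma S_eq_step: "S_step n x y \<Longrightarrow> S_eq n x y"
  by (simp add: S_eq_def)

lemma eq_full_rot: "k < n \<Longrightarrow> S_eq n (A @ full_word n @ B) (A @ rotate k (full_word n) @ B)"
proof (cases "k = 0")
  case True then show ?thesis by simp
next
  case False
  assume "k < n"
  then show ?thesis using False by (intro S_eq_step S_step.fwd) auto
qed

lemma eq_ch: "n > 0 \<Longrightarrow> S_eq n (A @ ch n e n @ B) (A @ ch n e' n @ B)"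
proof -
  assume n: "n > 0"
  have r: "ch n c n = rotate (c mod n) (full_word n)" for c
    using ch_cong[of c n "c mod n" n] rot_ch[of "c mod n" n] n by simp
  show ?thesis unfolding r
    by (rule S_eq_trans[OF S_eq_sym[OF eq_full_rot] eq_full_rot]) (use n in auto)
qed

lemma S_eq_length: "S_eq n x y \<Longrightarrow> length x = length y"
  unfolding S_eq_def
  by (induction rule: rtranclp_induct) (auto dest!: step_ch)

lemma S_eq_words: "S_eq n x y \<Longrightarrow> n > 0 \<Longrightarrow> x \<in> words n \<Longrightarrow> y \<in> words n"
  unfolding S_eq_def
proof (induction rule: rtranclp_induct)
  case base then show ?case by simp
next
  case (step y z)
  then obtain A B e e' where "y = A @ ch n e n @ B" "z = A @ ch n e' n @ B" by (blast dest: step_ch)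
  with step ch_set[of n e' n] show ?case by (auto simp: words_def)
qed


lemma H:
  assumes T: "T @ T' = ch n a n" and Y: "ch n b n @ Y = T' @ Z" and n: "n > 0"
  shows "(T = [] \<and> Y = Z) \<or> (T' = [] \<and> T = ch n a n \<and> Z = ch n b n @ Y) \<or>
         (0 < length T \<and> length T < n \<and> T = ch n a (length T) \<and> Z = ch n a (length T) @ Y)"
proof -
  define d where "d = length T"
  have dn: "d \<le> n" using arg_cong[OF T, of length] by (simp add: d_def)
  consider "d = 0" | "d = n" | "0 < d \<and> d < n" using dn by linarith
  then show ?thesis
  proof cases
    case 1
    then have "T = []" by (simp add: d_def)
    with T Y have "ch n b n @ Y = ch n a n @ Z" by simp
    then have "Y = Z" by (simp add: append_eq_append_conv)
    with \<open>T = []\<close> show ?thesis by simp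
  next
    case 2
    then have "T' = []" using arg_cong[OF T, of length] by (simp add: d_def)
    with T Y show ?thesis by simp
  next
    case 3
    have sp: "ch n a n = ch n a d @ ch n (a+d) (n-d)"
      using ch_add[of n a d "n-d"] 3 by simp
    from T[unfolded sp] have TT: "T = ch n a d" "T' = ch n (a+d) (n-d)"
      by (simp_all add: append_eq_append_conv d_def)
    have sp2: "ch n b n = ch n b (n-d) @ ch n (b+(n-d)) d"
      using ch_add[of n b "n-d" d] 3 by simp
    from Y[unfolded sp2 TT] have "ch n b (n-d) @ (ch n (b+(n-d)) d @ Y) = ch n (a+d) (n-d) @ Z"
      by simp
    then have e1: "ch n b (n-d) = ch n (a+d) (n-d)" and e2: "Z = ch n (b+(n-d)) d @ Y"
      by (simp_all add: append_eq_append_conv)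
    from ch_eq_mod[OF _ e1] 3 have "b mod n = (a+d) mod n" by simp
    then have "(b+(n-d)) mod n = ((a+d)+(n-d)) mod n" by (rule mod_add_cong) simp
    also have "\<dots> = a mod n" using 3 by simp
    finally have "ch n (b+(n-d)) d = ch n a d" by (rule ch_cong)
    moreover have "length T = d" by (simp add: d_def)
    ultimately show ?thesis using e2 TT 3 by simp
  qed
qed

lemma overlap:
  assumes eq: "u @ ch n c n @ v = A @ ch n e n @ B" and n: "n > 0"
  shows "(\<exists>M. u = A @ ch n e n @ M \<and> B = M @ ch n c n @ v) \<or>
         (\<exists>M. A = u @ ch n c n @ M \<and> v = M @ ch n e n @ B) \<or>
         (u = A \<and> v = B) \<or>
         (\<exists>d. u = A @ ch n e d \<and> B = ch n e d @ v) \<or>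
         (\<exists>d. A = u @ ch n c d \<and> v = ch n c d @ B)"
proof -
  from append_eq_append_conv2[THEN iffD1, OF eq] obtain T where
    "(u = A @ T \<and> T @ ch n c n @ v = ch n e n @ B) \<or> (u @ T = A \<and> ch n c n @ v = T @ ch n e n @ B)"
    by blast
  then show ?thesis
  proof
    assume a: "u = A @ T \<and> T @ ch n c n @ v = ch n e n @ B"
    then have "T @ (ch n c n @ v) = ch n e n @ B" by simp
    from append_eq_append_conv2[THEN iffD1, OF this] obtain T' where
      "(T = ch n e n @ T' \<and> T' @ ch n c n @ v = B) \<or> (T @ T' = ch n e n \<and> ch n c n @ v = T' @ B)"
      by blast
    then show ?thesis
    proof
      assume h: "T = ch n e n @ T' \<and> T' @ ch n c n @ v = B"
      have "u = A @ ch n e n @ T' \<and> B = T' @ ch n c n @ v" using a h by simp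
      then show ?thesis by blast
    next
      assume b: "T @ T' = ch n e n \<and> ch n c n @ v = T' @ B"
      from H[of T T' n e c v B] b n consider "T = [] \<and> v = B" | "T' = [] \<and> T = ch n e n \<and> B = ch n c n @ v"
        | "T = ch n e (length T) \<and> B = ch n e (length T) @ v" by blast
      then show ?thesis
      proof cases
        case 1 with a have "u = A \<and> v = B" by simp
        then show ?thesis by blast
      next
        case 2 with a have "u = A @ ch n e n @ [] \<and> B = [] @ ch n c n @ v" by simp
        then show ?thesis by blast
      next
        case 3 with a have "u = A @ ch n e (length T) \<and> B = ch n e (length T) @ v" by simp
        then show ?thesis by blast
      qed
    qed
  next
    assume a: "u @ T = A \<and> ch n c n @ v = T @ ch n e n @ B"
    then have "T @ (ch n e n @ B) = ch n c n @ v" by simp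
    from append_eq_append_conv2[THEN iffD1, OF this] obtain T' where
      "(T = ch n c n @ T' \<and> T' @ ch n e n @ B = v) \<or> (T @ T' = ch n c n \<and> ch n e n @ B = T' @ v)"
      by blast
    then show ?thesis
    proof
      assume h: "T = ch n c n @ T' \<and> T' @ ch n e n @ B = v"
      have "A = u @ ch n c n @ T' \<and> v = T' @ ch n e n @ B" using a h by simp
      then show ?thesis by blast
    next
      assume b: "T @ T' = ch n c n \<and> ch n e n @ B = T' @ v"
      from H[of T T' n c e B v] b n consider "T = [] \<and> B = v" | "T' = [] \<and> T = ch n c n \<and> v = ch n e n @ B"
        | "T = ch n c (length T) \<and> v = ch n c (length T) @ B" by blast
      then show ?thesis
      proof cases
        case 1 with a have "u = A \<and> v = B" by simp
        then show ?thesis by blast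
      next
        case 2 with a have "A = u @ ch n c n @ [] \<and> v = [] @ ch n e n @ B" by simp
        then show ?thesis by blast
      next
        case 3 with a have "A = u @ ch n c (length T) \<and> v = ch n c (length T) @ B" by simp
        then show ?thesis by blast
      qed
    qed
  qed
qed


definition K :: "nat \<Rightarrow> nat list \<Rightarrow> nat list \<Rightarrow> nat list \<Rightarrow> bool" where
  "K n P x w \<longleftrightarrow> (\<exists>u c v. w = u @ ch n c n @ v \<and> S_eq n x (P @ u @ v))"

lemma K_step:
  assumes n: "n > 0" and k: "K n P x w" and st: "S_step n w w'"
  shows "K n P x w'"
proof -
  from k obtain u c v where w: "w = u @ ch n c n @ v" and x: "S_eq n x (P @ u @ v)"
    unfolding K_def by blast
  from step_ch[OF st] obtain A B e e' where wA: "w = A @ ch n e n @ B" and w': "w' = A @ ch n e' n @ B"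
    by blast
  from overlap[OF _ n, where u=u and c=c and v=v and A=A and e=e and B=B] w wA consider
     (a) M where "u = A @ ch n e n @ M" "B = M @ ch n c n @ v"
   | (b) M where "A = u @ ch n c n @ M" "v = M @ ch n e n @ B"
   | (c) "u = A" "v = B"
   | (d) d where "u = A @ ch n e d" "B = ch n e d @ v"
   | (e) d where "A = u @ ch n c d" "v = ch n c d @ B"
    by metis
  then show ?thesis
  proof cases
    case a
    have "w' = (A @ ch n e' n @ M) @ ch n c n @ v" using w' a by simp
    moreover have "S_eq n x (P @ (A @ ch n e' n @ M) @ v)"
    proof -
      have "S_eq n x ((P @ A) @ ch n e n @ M @ v)" using x a by simp
      from S_eq_trans[OF this eq_ch[OF n, of "P @ A" e "M @ v" e']] show ?thesis by simp
    qed
    ultimately show ?thesis unfolding K_def by blast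
  next
    case b
    have "w' = u @ ch n c n @ (M @ ch n e' n @ B)" using w' b by simp
    moreover have "S_eq n x (P @ u @ (M @ ch n e' n @ B))"
    proof -
      have "S_eq n x ((P @ u @ M) @ ch n e n @ B)" using x b by simp
      from S_eq_trans[OF this eq_ch[OF n, of "P @ u @ M" e "B" e']] show ?thesis by simp
    qed
    ultimately show ?thesis unfolding K_def by blast
  next
    case c
    then show ?thesis using w' x unfolding K_def by blast
  next
    case d
    have "w' = A @ ch n e' n @ (ch n e d @ v)" using w' d by simp
    moreover have "S_eq n x (P @ A @ (ch n e d @ v))" using x d by simp
    ultimately show ?thesis unfolding K_def by blast
  next
    case e
    have "w' = (u @ ch n c d) @ ch n e' n @ B" using w' e by simp
    moreover have "S_eq n x (P @ (u @ ch n c d) @ B)" using x e by simp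
    ultimately show ?thesis unfolding K_def by blast
  qed
qed

lemma inv_rtc:
  assumes "S_eq n w w'" "I w" "\<And>w w'. I w \<Longrightarrow> S_step n w w' \<Longrightarrow> I w'"
  shows "I w'"
  using assms(1,2) unfolding S_eq_def
proof (induction rule: rtranclp_induct)
  case base then show ?case .
next
  case (step y z) then show ?case using assms(3) by blast
qed

lemma ch_0_Suc: "ch n 0 (Suc p) = 1 # ch n 1 p"
  using ch_add[of n 0 1 p] by (simp add: ch_one)

lemma ch_head0:
  assumes n: "n \<ge> 2" and eq: "ch n e n @ B = 1 # y"
  shows "y = tail_word n @ B"
proof -
  have sp: "ch n e n = ch n e 1 @ ch n (e+1) (n-1)" using ch_add[of n e 1 "n-1"] n by simp
  from eq[unfolded sp] have "e mod n = 0" and y: "y = ch n (e+1) (n-1) @ B" by (simp_all add: ch_one)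
  then have "(e+1) mod n = 1 mod n" using mod_add_cong[of e n 0 1 1] by simp
  then have "ch n (e+1) (n-1) = ch n 1 (n-1)" by (rule ch_cong)
  with y tail_ch[OF n] show ?thesis by simp
qed

definition I1 :: "nat \<Rightarrow> nat list \<Rightarrow> nat list \<Rightarrow> bool" where
  "I1 n x w \<longleftrightarrow> (\<exists>y. w = 1 # y \<and> S_eq n x y) \<or> K n (tail_word n) x w"

lemma I1_step:
  assumes n: "n \<ge> 2" and i: "I1 n x w" and st: "S_step n w w'"
  shows "I1 n x w'"
proof -
  have n0: "n > 0" using n by simp
  from step_ch[OF st] obtain A B e e' where wA: "w = A @ ch n e n @ B" and w': "w' = A @ ch n e' n @ B"
    by blast
  from i consider (f) y where "w = 1 # y" "S_eq n x y" | (k) "K n (tail_word n) x w"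
    unfolding I1_def by blast
  then show ?thesis
  proof cases
    case k then show ?thesis using K_step[OF n0 k st] unfolding I1_def by blast
  next
    case f
    show ?thesis
    proof (cases A)
      case Nil
      with wA f have "ch n e n @ B = 1 # y" by simp
      from ch_head0[OF n this] f have "S_eq n x (tail_word n @ [] @ B)" by simp
      moreover have "w' = [] @ ch n e' n @ B" using w' Nil by simp
      ultimately show ?thesis unfolding I1_def K_def by blast
    next
      case (Cons a A')
      with wA f have y: "y = A' @ ch n e n @ B" and a: "a = 1" by simp_all
      have "S_eq n x (A' @ ch n e' n @ B)" using S_eq_trans[OF f(2)[unfolded y] eq_ch[OF n0]] .
      moreover have "w' = 1 # (A' @ ch n e' n @ B)" using w' Cons a by simp
      ultimately show ?thesis unfolding I1_def by blast
    qed
  qed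
qed

lemma TL:
  assumes n: "n \<ge> 2" and eq: "tail_word n @ y = A @ ch n e n @ B"
  shows "(\<exists>T. A = tail_word n @ T \<and> y = T @ ch n e n @ B) \<or>
         (\<exists>p. p < n - 1 \<and> A = ch n 1 p \<and> y = ch n 0 (Suc p) @ B)"
proof -
  from append_eq_append_conv2[THEN iffD1, OF eq] obtain T where
    "(tail_word n = A @ T \<and> T @ y = ch n e n @ B) \<or> (tail_word n @ T = A \<and> y = T @ ch n e n @ B)"
    by blast
  then show ?thesis
  proof
    assume "tail_word n @ T = A \<and> y = T @ ch n e n @ B"
    then show ?thesis by blast
  next
    assume a: "tail_word n = A @ T \<and> T @ y = ch n e n @ B"
    show ?thesis
    proof (cases "T = []")
      case True
      with a have "A = tail_word n @ [] \<and> y = [] @ ch n e n @ B" by simp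
      then show ?thesis by blast
    next
      case False
      define p where "p = length A"
      have len: "length A + length T = n - 1" using arg_cong[OF conjunct1[OF a], of length] tail_ch[OF n] by simp
      then have pl: "p < n - 1" using False by (cases T) (auto simp: p_def)
      have sp: "ch n 1 (n-1) = ch n 1 p @ ch n (1+p) (n-1-p)"
        using ch_add[of n 1 p "n-1-p"] pl by simp
      from a tail_ch[OF n] sp have "A @ T = ch n 1 p @ ch n (1+p) (n-1-p)" by simp
      then have AT: "A = ch n 1 p" "T = ch n (1+p) (n-1-p)"
        by (simp_all add: append_eq_append_conv p_def)
      have sp2: "ch n e n = ch n e (n-1-p) @ ch n (e+(n-1-p)) (Suc p)"
        using ch_add[of n e "n-1-p" "Suc p"] pl by simp
      from a AT sp2 have "ch n (1+p) (n-1-p) @ y = ch n e (n-1-p) @ (ch n (e+(n-1-p)) (Suc p) @ B)"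
        by simp
      then have e1: "ch n (1+p) (n-1-p) = ch n e (n-1-p)" and y: "y = ch n (e+(n-1-p)) (Suc p) @ B"
        by (simp_all add: append_eq_append_conv)
      from ch_eq_mod[OF _ e1] pl have "(1+p) mod n = e mod n" by simp
      then have "((1+p) + (n-1-p)) mod n = (e + (n-1-p)) mod n" by (rule mod_add_cong) simp
      moreover have "(1+p) + (n-1-p) = n" using pl by simp
      ultimately have "(e + (n-1-p)) mod n = 0 mod n" by simp
      then have "ch n (e+(n-1-p)) (Suc p) = ch n 0 (Suc p)" by (rule ch_cong)
      with y AT pl have "p < n - 1 \<and> A = ch n 1 p \<and> y = ch n 0 (Suc p) @ B" by simp
      then show ?thesis by blast
    qed
  qed
qed

definition J :: "nat \<Rightarrow> nat list \<Rightarrow> nat list \<Rightarrow> bool" where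
  "J n x w \<longleftrightarrow> (\<exists>y. w = tail_word n @ y \<and> S_eq n x y) \<or> K n [1] x w"

lemma J_step:
  assumes n: "n \<ge> 2" and i: "J n x w" and st: "S_step n w w'"
  shows "J n x w'"
proof -
  have n0: "n > 0" using n by simp
  from step_ch[OF st] obtain A B e e' where wA: "w = A @ ch n e n @ B" and w': "w' = A @ ch n e' n @ B"
    by blast
  from i consider (f) y where "w = tail_word n @ y" "S_eq n x y" | (k) "K n [1] x w"
    unfolding J_def by blast
  then show ?thesis
  proof cases
    case k then show ?thesis using K_step[OF n0 k st] unfolding J_def by blast
  next
    case f
    from TL[OF n, of y A e B] f wA consider
      (i) T where "A = tail_word n @ T" "y = T @ ch n e n @ B"
    | (ii) p where "p < n - 1" "A = ch n 1 p" "y = ch n 0 (Suc p) @ B"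
      by metis
    then show ?thesis
    proof cases
      case i
      have "S_eq n x (T @ ch n e' n @ B)" using S_eq_trans[OF f(2)[unfolded i(2)] eq_ch[OF n0]] .
      moreover have "w' = tail_word n @ (T @ ch n e' n @ B)" using w' i by simp
      ultimately show ?thesis unfolding J_def by blast
    next
      case ii
      have "S_eq n x ([1] @ ch n 1 p @ B)" using f(2) ii by (simp add: ch_0_Suc)
      moreover have "w' = ch n 1 p @ ch n e' n @ B" using w' ii by simp
      ultimately show ?thesis unfolding J_def K_def by blast
    qed
  qed
qed

lemma central:
  assumes n: "n > 0"
  shows "u \<in> words n \<Longrightarrow> S_eq n (ch n e n @ u) (u @ ch n e' n)"
proof (induction u arbitrary: e e')
  case Nil
  show ?case using eq_ch[OF n, of "[]" e "[]" e'] by simp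
next
  case (Cons a u)
  then have a: "a \<in> {1..n}" and u: "u \<in> words n" by (auto simp: words_def)
  define k where "k = a - 1"
  have ak: "a = k mod n + 1" using a by (auto simp: k_def)
  have s1: "ch n k n @ [a] = [a] @ ch n (k+1) n"
  proof -
    have "ch n k (n+1) = ch n k n @ [a]" using ch_add[of n k n 1] ak by (simp add: ch_one)
    moreover have "ch n k (1+n) = [a] @ ch n (k+1) n" using ch_add[of n k 1 n] ak by (simp add: ch_one)
    ultimately show ?thesis by simp
  qed
  have "S_eq n (ch n e n @ a # u) (ch n k n @ [a] @ u)" using eq_ch[OF n, of "[]" e "a # u" k] by simp
  also have "ch n k n @ [a] @ u = [a] @ ch n (k+1) n @ u" using s1 by (metis append.assoc)
  finally have 1: "S_eq n (ch n e n @ a # u) ([a] @ ch n (k+1) n @ u)" .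
  have "S_eq n ([a] @ (ch n (k+1) n @ u) @ []) ([a] @ (u @ ch n e' n) @ [])"
    by (rule S_eq_cong) (rule Cons.IH[OF u])
  then show ?case using S_eq_trans[OF 1] by simp
qed


lemma full_tail: "n \<ge> 1 \<Longrightarrow> full_word n = 1 # tail_word n"
  by (simp add: full_word_def tail_word_def upt_conv_Cons numeral_2_eq_2)

lemma ch0_tail: "n \<ge> 2 \<Longrightarrow> ch n 0 n = 1 # tail_word n"
  using full_ch[of n] full_tail[of n] by simp

lemma ch1_tail: "n \<ge> 2 \<Longrightarrow> ch n 1 n = tail_word n @ [1]"
proof -
  assume n: "n \<ge> 2"
  have "ch n 1 ((n-1) + 1) = ch n 1 (n-1) @ ch n (1 + (n-1)) 1" by (rule ch_add)
  with n tail_ch[OF n] show ?thesis by (simp add: ch_one)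
qed

lemma tail_hd: "n \<ge> 2 \<Longrightarrow> tail_word n = 2 # ch n 2 (n-2)"
proof -
  assume n: "n \<ge> 2"
  have "ch n 1 (1 + (n-2)) = ch n 1 1 @ ch n (1+1) (n-2)" by (rule ch_add)
  moreover have "1 + (n-2) = n - 1" using n by simp
  moreover have "1 mod n = 1" using n by simp
  ultimately show ?thesis using tail_ch[OF n] by (simp add: ch_one numeral_2_eq_2)
qed

lemma words_append[simp]: "xs @ ys \<in> words n \<longleftrightarrow> xs \<in> words n \<and> ys \<in> words n"
  by (auto simp: words_def)

lemma words_Cons[simp]: "x # ys \<in> words n \<longleftrightarrow> x \<in> {1..n} \<and> ys \<in> words n"
  by (auto simp: words_def)

lemma C1:
  assumes n: "n \<ge> 2" and eq: "S_eq n (1 # x) (1 # y)" and y: "y \<in> words n"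
  shows "S_eq n x y"
proof -
  have "I1 n x (1 # x)" unfolding I1_def by auto
  moreover have "\<And>w w'. I1 n x w \<Longrightarrow> S_step n w w' \<Longrightarrow> I1 n x w'" using I1_step[OF n] by blast
  ultimately have "I1 n x (1 # y)" using inv_rtc[OF eq] by blast
  then consider (f) "S_eq n x y" | (k) u c v where "1 # y = u @ ch n c n @ v" "S_eq n x (tail_word n @ u @ v)"
    unfolding I1_def K_def by blast
  then show ?thesis
  proof cases
    case f then show ?thesis .
  next
    case k
    show ?thesis
    proof (cases u)
      case Nil
      with k ch_head0[OF n, of c v y] show ?thesis by simp
    next
      case (Cons a u')
      with k have yy: "y = u' @ ch n c n @ v" by simp
      with y have u': "u' \<in> words n" by simp
      have "S_eq n x (ch n 1 n @ u' @ v)" using k(2) Cons k(1) ch1_tail[OF n] by simp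
      moreover have "S_eq n ([] @ (ch n 1 n @ u') @ v) ([] @ (u' @ ch n c n) @ v)"
        by (rule S_eq_cong) (rule central[OF _ u'], use n in simp)
      ultimately show ?thesis using yy by (auto intro: S_eq_trans)
    qed
  qed
qed

lemma C2:
  assumes n: "n \<ge> 2" and eq: "S_eq n (tail_word n @ x) (tail_word n @ y)" and y: "y \<in> words n"
  shows "S_eq n x y"
proof -
  have "J n x (tail_word n @ x)" unfolding J_def by auto
  moreover have "\<And>w w'. J n x w \<Longrightarrow> S_step n w w' \<Longrightarrow> J n x w'" using J_step[OF n] by blast
  ultimately have "J n x (tail_word n @ y)" using inv_rtc[OF eq] by blast
  then consider (f) "S_eq n x y" | (k) u c v where "tail_word n @ y = u @ ch n c n @ v" "S_eq n x ([1] @ u @ v)"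
    unfolding J_def K_def by blast
  then show ?thesis
  proof cases
    case f then show ?thesis .
  next
    case k
    from TL[OF n k(1)] consider
      (i) T where "u = tail_word n @ T" "y = T @ ch n c n @ v"
    | (ii) p where "p < n - 1" "u = ch n 1 p" "y = ch n 0 (Suc p) @ v"
      by metis
    then show ?thesis
    proof cases
      case i
      with y have T: "T \<in> words n" by simp
      have "S_eq n x (ch n 0 n @ T @ v)" using k(2) i ch0_tail[OF n] by simp
      moreover have "S_eq n ([] @ (ch n 0 n @ T) @ v) ([] @ (T @ ch n c n) @ v)"
        by (rule S_eq_cong) (rule central[OF _ T], use n in simp)
      ultimately show ?thesis using i by (auto intro: S_eq_trans)
    next
      case ii
      then show ?thesis using k(2) by (simp add: ch_0_Suc)
    qed
  qed
qed

lemma L: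
  assumes n: "n \<ge> 2" and eq: "S_eq n (1 # x) (tail_word n @ y)" and y: "y \<in> words n"
  shows "\<exists>z. S_eq n x (tail_word n @ z) \<and> S_eq n y (1 # z)"
proof -
  have "I1 n x (1 # x)" unfolding I1_def by auto
  moreover have "\<And>w w'. I1 n x w \<Longrightarrow> S_step n w w' \<Longrightarrow> I1 n x w'" using I1_step[OF n] by blast
  ultimately have "I1 n x (tail_word n @ y)" using inv_rtc[OF eq] by blast
  moreover have "\<not> (\<exists>y'. tail_word n @ y = 1 # y')" using tail_hd[OF n] by simp
  ultimately obtain u c v where k: "tail_word n @ y = u @ ch n c n @ v" "S_eq n x (tail_word n @ u @ v)"
    unfolding I1_def K_def by blast
  from TL[OF n k(1)] consider
      (i) T where "u = tail_word n @ T" "y = T @ ch n c n @ v"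
    | (ii) p where "p < n - 1" "u = ch n 1 p" "y = ch n 0 (Suc p) @ v"
    by metis
  then show ?thesis
  proof cases
    case i
    with y have T: "T \<in> words n" by simp
    have 1: "S_eq n x (tail_word n @ (tail_word n @ T @ v))" using k(2) i by simp
    have "S_eq n ([] @ (ch n 0 n @ T) @ v) ([] @ (T @ ch n c n) @ v)"
      by (rule S_eq_cong) (rule central[OF _ T], use n in simp)
    then have "S_eq n y (1 # (tail_word n @ T @ v))" using i ch0_tail[OF n] by (simp add: S_eq_sym)
    with 1 show ?thesis by blast
  next
    case ii
    then have "S_eq n x (tail_word n @ (ch n 1 p @ v)) \<and> S_eq n y (1 # (ch n 1 p @ v))"
      using k(2) by (simp add: ch_0_Suc)
    then show ?thesis by blast
  qed
qed


abbreviation pw :: "nat \<Rightarrow> nat list" where "pw p \<equiv> replicate p 1"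
abbreviation tw :: "nat \<Rightarrow> nat \<Rightarrow> nat list" where "tw n q \<equiv> concat (replicate q (tail_word n))"

lemma tail_words: "tail_word n \<in> words n" by (auto simp: words_def tail_word_def)
lemma pw_words: "n \<ge> 1 \<Longrightarrow> pw p \<in> words n" by (auto simp: words_def)
lemma words_Nil[simp]: "[] \<in> words n" by (simp add: words_def)
lemma tw_words: "tw n q \<in> words n" using tail_words by (induction q) auto

lemma N1:
  assumes n: "n \<ge> 2" and b: "b \<in> words n" "\<not> in_right_ideal n [1] b"
  shows "S_eq n (tw n q @ b) (1 # z) \<Longrightarrow> False"
proof (induction q arbitrary: z)
  case 0
  then have "S_eq n b (1 # z)" by simp
  moreover from S_eq_words[OF this] n b have "z \<in> words n" by simp
  ultimately show ?case using b(2) unfolding in_right_ideal_def by auto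
next
  case (Suc q)
  then have "S_eq n (1 # z) (tail_word n @ (tw n q @ b))" using S_eq_sym by simp
  from L[OF n this] b tw_words obtain z' where "S_eq n (tw n q @ b) (1 # z')" by auto
  then show ?case by (rule Suc.IH)
qed

lemma N2:
  assumes n: "n \<ge> 2" and b: "b \<in> words n" "\<not> in_right_ideal n (tail_word n) b"
  shows "S_eq n (pw p @ b) (tail_word n @ z) \<Longrightarrow> False"
proof (induction p arbitrary: z)
  case 0
  then have "S_eq n b (tail_word n @ z)" by simp
  moreover from S_eq_words[OF this] n b have "z \<in> words n" by simp
  ultimately show ?case using b(2) unfolding in_right_ideal_def by auto
next
  case (Suc p)
  then have e: "S_eq n (1 # (pw p @ b)) (tail_word n @ z)" by simp
  from S_eq_words[OF e] n b pw_words[of n p] have "z \<in> words n" by simp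
  from L[OF n e this] obtain z' where "S_eq n (pw p @ b) (tail_word n @ z')" by blast
  then show ?case by (rule Suc.IH)
qed

lemma UQt:
  assumes n: "n \<ge> 2" and b: "b \<in> words n" "\<not> in_right_ideal n (tail_word n) b"
    and b': "b' \<in> words n" "\<not> in_right_ideal n (tail_word n) b'"
  shows "S_eq n (tw n q @ b) (tw n q' @ b') \<Longrightarrow> q = q' \<and> S_eq n b b'"
proof (induction q arbitrary: q')
  case 0
  show ?case
  proof (cases q')
    case 0 with "0.prems" show ?thesis by simp
  next
    case (Suc r)
    with "0.prems" have "S_eq n b (tail_word n @ (tw n r @ b'))" by simp
    with b(2) b' tw_words show ?thesis unfolding in_right_ideal_def by auto
  qed
next
  case (Suc q)
  show ?case
  proof (cases q')
    case 0
    with S_eq_sym[OF Suc.prems] have "S_eq n b' (tail_word n @ (tw n q @ b))" by simp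
    with b'(2) b tw_words show ?thesis unfolding in_right_ideal_def by auto
  next
    case (Suc r)
    with Suc.prems have "S_eq n (tail_word n @ (tw n q @ b)) (tail_word n @ (tw n r @ b'))" by simp
    from C2[OF n this] b' tw_words have "S_eq n (tw n q @ b) (tw n r @ b')" by simp
    from Suc.IH[OF this] Suc show ?thesis by simp
  qed
qed

lemma UQ:
  assumes n: "n \<ge> 2" and b: "b \<in> words n" "\<not> in_right_ideal n [1] b" "\<not> in_right_ideal n (tail_word n) b"
    and b': "b' \<in> words n" "\<not> in_right_ideal n [1] b'" "\<not> in_right_ideal n (tail_word n) b'"
  shows "S_eq n (pw p @ tw n q @ b) (pw p' @ tw n q' @ b') \<Longrightarrow> p = p' \<and> q = q' \<and> S_eq n b b'"
proof (induction p arbitrary: p')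
  case 0
  show ?case
  proof (cases p')
    case 0 with "0.prems" UQt[OF n b(1,3) b'(1,3)] show ?thesis by simp
  next
    case (Suc r)
    with "0.prems" have "S_eq n (tw n q @ b) (1 # (pw r @ tw n q' @ b'))" by simp
    from N1[OF n b(1,2) this] show ?thesis ..
  qed
next
  case (Suc p)
  show ?case
  proof (cases p')
    case 0
    with S_eq_sym[OF Suc.prems] have "S_eq n (tw n q' @ b') (1 # (pw p @ tw n q @ b))" by simp
    from N1[OF n b'(1,2) this] show ?thesis ..
  next
    case (Suc r)
    with Suc.prems have "S_eq n (1 # (pw p @ tw n q @ b)) (1 # (pw r @ tw n q' @ b'))" by simp
    from C1[OF n this] b' tw_words pw_words[of n r] n have "S_eq n (pw p @ tw n q @ b) (pw r @ tw n q' @ b')" by simp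
    from Suc.IH[OF this] Suc show ?thesis by simp
  qed
qed

lemma COMM:
  assumes n: "n \<ge> 2"
  shows "S_eq n (tail_word n @ pw p @ X) (pw p @ tail_word n @ X)"
proof (induction p arbitrary: X)
  case 0 then show ?case by simp
next
  case (Suc p)
  have "S_eq n ([] @ ch n 1 n @ (pw p @ X)) ([] @ ch n 0 n @ (pw p @ X))" by (rule eq_ch) (use n in simp)
  then have 1: "S_eq n (tail_word n @ pw (Suc p) @ X) ([1] @ (tail_word n @ pw p @ X) @ [])"
    using ch1_tail[OF n] ch0_tail[OF n] by simp
  have "S_eq n ([1] @ (tail_word n @ pw p @ X) @ []) ([1] @ (pw p @ tail_word n @ X) @ [])"
    by (rule S_eq_cong) (rule Suc.IH)
  with 1 show ?case by (auto intro: S_eq_trans)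
qed

lemma EX:
  assumes n: "n \<ge> 2"
  shows "a \<in> words n \<Longrightarrow> \<exists>p q b. b \<in> words n \<and> \<not> in_right_ideal n [1] b \<and>
      \<not> in_right_ideal n (tail_word n) b \<and> S_eq n a (pw p @ tw n q @ b)"
proof (induction "length a" arbitrary: a rule: less_induct)
  case less
  show ?case
  proof (cases "in_right_ideal n [1] a")
    case True
    then obtain w where w: "w \<in> words n" "S_eq n a (1 # w)" unfolding in_right_ideal_def by auto
    from S_eq_length[OF w(2)] have "length w < length a" by simp
    from less(1)[OF this w(1)] obtain p q b where pqb: "b \<in> words n" "\<not> in_right_ideal n [1] b"
      "\<not> in_right_ideal n (tail_word n) b" "S_eq n w (pw p @ tw n q @ b)" by blast
    have "S_eq n ([1] @ w @ []) ([1] @ (pw p @ tw n q @ b) @ [])" by (rule S_eq_cong) (rule pqb(4))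
    then have "S_eq n a (pw (Suc p) @ tw n q @ b)" using S_eq_trans[OF w(2)] by simp
    with pqb show ?thesis by blast
  next
    case F1: False
    show ?thesis
    proof (cases "in_right_ideal n (tail_word n) a")
      case True
      then obtain w where w: "w \<in> words n" "S_eq n a (tail_word n @ w)" unfolding in_right_ideal_def by auto
      from S_eq_length[OF w(2)] n have "length w < length a" by (simp add: tail_word_def)
      from less(1)[OF this w(1)] obtain p q b where pqb: "b \<in> words n" "\<not> in_right_ideal n [1] b"
        "\<not> in_right_ideal n (tail_word n) b" "S_eq n w (pw p @ tw n q @ b)" by blast
      have "S_eq n (tail_word n @ w @ []) (tail_word n @ (pw p @ tw n q @ b) @ [])" by (rule S_eq_cong) (rule pqb(4))
      then have "S_eq n a (tail_word n @ pw p @ tw n q @ b)" using S_eq_trans[OF w(2)] by simp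
      from S_eq_trans[OF this COMM[OF n]] have "S_eq n a (pw p @ tw n (Suc q) @ b)" by simp
      with pqb show ?thesis by blast
    next
      case False
      with F1 less(2) have "S_eq n a (pw 0 @ tw n 0 @ a)" by simp
      with F1 False less(2) show ?thesis by blast
    qed
  qed
qed

lemma nf_eq: "n \<ge> 1 \<Longrightarrow> e \<in> {0,1} \<Longrightarrow> nf_word n i e j b = pw (i+e) @ tw n (e+j) @ b"
proof -
  assume n: "n \<ge> 1" and e: "e \<in> {0,1}"
  have r: "replicate (i+1) (1::nat) = replicate i 1 @ [1]" by (simp add: replicate_append_same)
  from e consider "e = 0" | "e = 1" by blast
  then show ?thesis
  proof cases
    case 1 then show ?thesis by (simp add: nf_word_def)
  next
    case 2 then show ?thesis by (simp only: nf_word_def r) (simp add: full_tail[OF n])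
  qed
qed

theorem theorem2p1:
  fixes n :: nat
  assumes "n \<ge> 3"
  shows "\<forall>a\<in>words n.
     (\<exists>i e j b. admissible n i e j b \<and> S_eq n a (nf_word n i e j b)) \<and>
     (\<forall>i e j b i' e' j' b'.
        admissible n i e j b \<and> S_eq n a (nf_word n i e j b) \<and>
        admissible n i' e' j' b' \<and> S_eq n a (nf_word n i' e' j' b') \<longrightarrow>
        i = i' \<and> e = e' \<and> j = j' \<and> S_eq n b b')"
proof
  fix a assume a: "a \<in> words n"
  have n: "n \<ge> 2" "n \<ge> 1" using assms by simp_all
  show "(\<exists>i e j b. admissible n i e j b \<and> S_eq n a (nf_word n i e j b)) \<and>
     (\<forall>i e j b i' e' j' b'.
        admissible n i e j b \<and> S_eq n a (nf_word n i e j b) \<and>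
        admissible n i' e' j' b' \<and> S_eq n a (nf_word n i' e' j' b') \<longrightarrow>
        i = i' \<and> e = e' \<and> j = j' \<and> S_eq n b b')"
  proof
    from EX[OF n(1) a] obtain p q b where pqb: "b \<in> words n" "\<not> in_right_ideal n [1] b"
      "\<not> in_right_ideal n (tail_word n) b" "S_eq n a (pw p @ tw n q @ b)" by blast
    show "\<exists>i e j b. admissible n i e j b \<and> S_eq n a (nf_word n i e j b)"
    proof (cases "p \<ge> 1 \<and> q \<ge> 1")
      case True
      have "admissible n (p-1) 1 (q-1) b" using pqb by (simp add: admissible_def)
      moreover have "nf_word n (p-1) 1 (q-1) b = pw p @ tw n q @ b" using nf_eq[OF n(2)] True by simp
      ultimately show ?thesis using pqb(4) by metis
    next
      case False
      have "admissible n p 0 q b" using pqb False by (auto simp: admissible_def)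
      moreover have "nf_word n p 0 q b = pw p @ tw n q @ b" using nf_eq[OF n(2)] by simp
      ultimately show ?thesis using pqb(4) by metis
    qed
  next
    show "\<forall>i e j b i' e' j' b'.
        admissible n i e j b \<and> S_eq n a (nf_word n i e j b) \<and>
        admissible n i' e' j' b' \<and> S_eq n a (nf_word n i' e' j' b') \<longrightarrow>
        i = i' \<and> e = e' \<and> j = j' \<and> S_eq n b b'"
    proof (intro allI impI)
      fix i e j b i' e' j' b'
      assume h: "admissible n i e j b \<and> S_eq n a (nf_word n i e j b) \<and>
        admissible n i' e' j' b' \<and> S_eq n a (nf_word n i' e' j' b')"
      then have ad: "admissible n i e j b" "admissible n i' e' j' b'" by auto
      from h have "S_eq n (nf_word n i e j b) (nf_word n i' e' j' b')"
        using S_eq_trans[OF S_eq_sym] by blast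
      then have "S_eq n (pw (i+e) @ tw n (e+j) @ b) (pw (i'+e') @ tw n (e'+j') @ b')"
        using nf_eq[OF n(2)] ad by (simp add: admissible_def)
      from UQ[OF n(1) _ _ _ _ _ _ this] ad have r: "i+e = i'+e'" "e+j = e'+j'" "S_eq n b b'"
        by (auto simp: admissible_def)
      from ad have "e \<in> {0,1}" "e' \<in> {0,1}" "j \<ge> 1 \<longrightarrow> e = 1 \<or> i = 0" "j' \<ge> 1 \<longrightarrow> e' = 1 \<or> i' = 0"
        by (auto simp: admissible_def)
      with r show "i = i' \<and> e = e' \<and> j = j' \<and> S_eq n b b'" by auto
    qed
  qed
qed

end
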